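(* Let $l>0$, $d>0$, $V>0$, $\gamma_{\max}\in(0,\pi/2)$, and $k_1,k_2\in\mathbb{R}$. Let $\overline{\kappa}_0=\dfrac{\tan\gamma_{\max}}{\sqrt{l^2+d^2\tan^2\gamma_{\max}}}$. Suppose either (1) $k_1<0$ and $k_2>\dfrac{d}{l}\dfrac{\tan^2\gamma_{\max}}{\sqrt{l^2+d^2\tan^2\gamma_{\max}}}$, or (2) $k_1>0$ and $k_2<-\dfrac{1}{d}$. Then for every constant curvature $\kappa_0$ with $|\kappa_0|\le\overline{\kappa}_0$, the desired path-following solution ($e_{\rm D}\equiv0$, $\hat\theta_{\rm D}\equiv 0$) of the closed-loop system is stable, in the sense that, with $\lambda_1=\sqrt{1-d^2\kappa_0^2}$ and $\lambda_2=1+(l^2-d^2)\kappa_0^2$, both eigenvalues of the matrix $$\mathbf{A}=\begin{bmatrix}\dfrac{Vd}{l}\dfrac{\lambda_2}{\lambda_1}k_1k_2 & \dfrac{V}{\lambda_1}\Big(1+\dfrac{d}{l}\lambda_2k_1\Big)\\[2mm] \dfrac{V}{l}\Big(\lambda_2k_1k_2-\dfrac{l}{\lambda_1}\kappa_0^2\Big) & \dfrac{V\lambda_2}{l}k_1\end{bmatrix}$$ have strictly negative real parts.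
   Context: Path-following setting: a vehicle (kinematic bicycle model, wheels without side slip, constant longitudinal speed $V>0$, wheelbase $l$, steering angle $\gamma$) must make a point A on its longitudinal symmetry axis, at distance $d$ ahead of the rear axle center, follow a planar path. With $s_{\rm D}$ the arc length of the closest path point D, $\kappa_{\rm D}$ the path curvature at D, $e_{\rm D}$ the signed lateral deviation of A from the path and $\theta_{\rm D}$ the yaw angle error relative to the path tangent at D, the dynamics are $\dot s_{\rm D}=\frac{V}{1-e_{\rm D}\kappa_{\rm D}}(\cos\theta_{\rm D}-\frac{d}{l}\tan\gamma\sin\theta_{\rm D})$, $\dot e_{\rm D}=V(\sin\theta_{\rm D}+\frac{d}{l}\tan\gamma\cos\theta_{\rm D})$, $\dot\theta_{\rm D}=\frac{V}{l}\tan\gamma-\frac{V\kappa_{\rm D}}{1-e_{\rm D}\kappa_{\rm D}}(\cos\theta_{\rm D}-\frac{d}{l}\tan\gamma\sin\theta_{\rm D})$. The steering angle is set to $\gamma=\gamma_{\rm ff}+\gamma_{\rm fb}$ with $\gamma_{\rm ff}=\arctan\frac{l\kappa_{\rm D}}{\sqrt{1-(d\kappa_{\rm D})^2}}$ and $\gamma_{\rm fb}=g\big(k_1(\theta_{\rm D}-\theta_0+\arctan(k_2e_{\rm D}))\big)$, where $\theta_0=-\arcsin(d\kappa_{\rm D})$ and $g$ is a bounded, odd, continuously differentiable, increasing function with $g'(0)=1$ (e.g. $g(x)=\frac{2g_{\rm sat}}{\pi}\arctan(\frac{\pi}{2g_{\rm sat}}x)$). Set $\hat\theta_{\rm D}=\theta_{\rm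 D}-\theta_0$. For constant curvature $\kappa_{\rm D}\equiv\kappa_0$ the closed loop has the desired solution $e_{\rm D}\equiv0$, $\hat\theta_{\rm D}\equiv0$; the matrix $\mathbf{A}$ is the Jacobian of the closed-loop $(e_{\rm D},\hat\theta_{\rm D})$ dynamics at this solution, and stability is understood as this linearization being Hurwitz. The bound $|\kappa_0|\le\overline\kappa_0$ is the standing assumption that the curvature can be followed with steering angle at most $\gamma_{\max}$. *)

theory Defs
  imports Complex_Main "Jordan_Normal_Form.Char_Poly"
begin

text \<open>Upper curvature bound that can be followed with steering angle at most gamma_max.\<close>
definition kappa_bar :: "real \<Rightarrow> real \<Rightarrow> real \<Rightarrow> real" where
  "kappa_bar l d gmax = tan gmax / sqrt (l^2 + d^2 * (tan gmax)^2)"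

text \<open>Linearization matrix A of the closed-loop (e_D, hat theta_D) dynamics at the
  desired solution, for constant curvature kappa0.\<close>
definition lin_matrix :: "real \<Rightarrow> real \<Rightarrow> real \<Rightarrow> real \<Rightarrow> real \<Rightarrow> real \<Rightarrow> real mat" where
  "lin_matrix l d V k1 k2 kappa0 =
     (let lam1 = sqrt (1 - d^2 * kappa0^2);
          lam2 = 1 + (l^2 - d^2) * kappa0^2
      in mat_of_rows_list 2
          [[V * d / l * lam2 / lam1 * k1 * k2, V / lam1 * (1 + d / l * lam2 * k1)],
           [V / l * (lam2 * k1 * k2 - l / lam1 * kappa0^2), V * lam2 / l * k1]])"

end

theory Submission
  imports Defs
begin

lemma det1: assumes "(M::'a::comm_ring_1 mat) \<in> carrier_mat 1 1" shows "det M = M $$ (0,0)"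
  using assms by (simp add: det_def' permutes_sing[simplified] )

lemma det2: assumes "(M::'a::comm_ring_1 mat) \<in> carrier_mat 2 2"
  shows "det M = M $$ (0,0) * M $$ (1,1) - M $$ (0,1) * M $$ (1,0)"
proof -
  have "det M = (\<Sum>i<2. M $$ (i,0) * cofactor M i 0)" by (rule laplace_expansion_column[OF assms]) auto
  also have "\<dots> = M $$ (0,0) * M $$ (1,1) - M $$ (1,0) * M $$ (0,1)"
    using assms by (simp add: numeral_2_eq_2 cofactor_def det1 mat_delete_def lessThan_Suc)
  finally show ?thesis by (simp add: algebra_simps)
qed

lemma root_re_neg:
  fixes a b c e :: real and z :: complex
  assumes "(complex_of_real a - z) * (complex_of_real e - z) - complex_of_real b * complex_of_real c = 0"
    and "a + e < 0" and "a * e - b * c > 0"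
  shows "Re z < 0"
proof (rule ccontr)
  assume nz: "\<not> Re z < 0"
  obtain x y where z: "z = Complex x y" by (cases z)
  from assms(1) have re: "(a - x) * (e - x) - y * y - b * c = 0" and im: "y * (a + e - 2 * x) = 0"
    unfolding z complex_eq_iff by (auto simp: algebra_simps)
  have x: "x \<ge> 0" using nz z by simp
  have "a + e - 2 * x < 0" using x assms(2) by linarith
  then have "y = 0" using im by simp
  then have "x * x - (a + e) * x + (a * e - b * c) = 0" using re by (simp add: algebra_simps)
  moreover have "(a + e) * x \<le> 0" using x assms(2) by (simp add: mult_nonpos_nonneg)
  moreover have "x * x \<ge> 0" by simp
  ultimately show False using assms(3) by linarith
qed

lemma eig_2x2:
  fixes a b c e :: real and z :: complex
  assumes "eigenvalue (map_mat complex_of_real (mat_of_rows_list 2 [[a, b], [c, e]])) z"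
    and "a + e < 0" and "a * e - b * c > 0"
  shows "Re z < 0"
proof -
  define M where "M = map_mat complex_of_real (mat_of_rows_list 2 [[a, b], [c, e]])"
  have M: "M \<in> carrier_mat 2 2" unfolding M_def mat_of_rows_list_def by (simp add: numeral_2_eq_2)
  have "det (char_matrix M z) = 0" using assms(1) eigenvalue_det[OF M] unfolding M_def by simp
  moreover have "det (char_matrix M z) = (char_matrix M z) $$ (0,0) * (char_matrix M z) $$ (1,1)
      - (char_matrix M z) $$ (0,1) * (char_matrix M z) $$ (1,0)"
    by (rule det2) (use M in simp)
  moreover have "(char_matrix M z) $$ (0,0) = complex_of_real a - z"
    "(char_matrix M z) $$ (1,1) = complex_of_real e - z"
    "(char_matrix M z) $$ (0,1) = complex_of_real b"
    "(char_matrix M z) $$ (1,0) = complex_of_real c"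
    using M unfolding char_matrix_def by (auto simp: M_def mat_of_rows_list_def)
  ultimately have "(complex_of_real a - z) * (complex_of_real e - z) - complex_of_real b * complex_of_real c = 0"
    by simp
  then show ?thesis using root_re_neg assms(2,3) by blast
qed


lemma dtl:
  fixes V d l L1 L2 k1 k2 k :: real
  assumes "L1 > 0" "l > 0"
  shows "(V * d / l * L2 / L1 * k1 * k2) * (V * L2 / l * k1) - (V / L1 * (1 + d / l * L2 * k1)) * (V / l * (L2 * k1 * k2 - l / L1 * k^2))
    = V^2 / (l * L1^2) * (- L1 * L2 * k1 * k2 + l * k^2 + d * L2 * k1 * k^2)"
proof -
  define p where "p = 1 / L1"
  define q where "q = 1 / l"
  have p: "L1 * p = 1" and q: "l * q = 1" using assms by (auto simp: p_def q_def)
  have e1: "V * d / l * L2 / L1 * k1 * k2 = V * d * q * L2 * p * k1 * k2" by (simp add: p_def q_def)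
  have e2: "V * L2 / l * k1 = V * L2 * q * k1" by (simp add: q_def)
  have e3: "V / L1 * (1 + d / l * L2 * k1) = V * p * (1 + d * q * L2 * k1)" by (simp add: p_def q_def)
  have e4: "V / l * (L2 * k1 * k2 - l / L1 * k^2) = V * q * (L2 * k1 * k2 - l * p * k^2)" by (simp add: p_def q_def)
  have e5: "V^2 / (l * L1^2) = V^2 * q * p^2" by (simp add: p_def q_def power2_eq_square)
  show ?thesis unfolding e1 e2 e3 e4 e5
  proof -
    have "V * d * q * L2 * p * k1 * k2 * (V * L2 * q * k1) - V * p * (1 + d * q * L2 * k1) * (V * q * (L2 * k1 * k2 - l * p * k\<^sup>2))
       = V^2 * q * p * (- L2 * k1 * k2 + l * p * k^2 + d * q * L2 * k1 * (l * p) * k^2)"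
      by (simp add: algebra_simps power2_eq_square)
    also have "\<dots> = V\<^sup>2 * q * p\<^sup>2 * (- L1 * L2 * k1 * k2 + l * k\<^sup>2 + d * L2 * k1 * k\<^sup>2)"
    proof -
      have "V^2 * q * p * (- L2 * k1 * k2 + l * p * k^2 + d * q * L2 * k1 * (l * p) * k^2)
          = V^2 * q * p * (- (L1*p) * L2 * k1 * k2 + l * p * k^2 + d * L2 * k1 * p * k^2 * (l * q))"
        using p by (simp add: algebra_simps)
      also have "\<dots> = V^2 * q * p * (- (L1*p) * L2 * k1 * k2 + p * (l * k^2) + d * L2 * k1 * p * k^2)"
        using q by (simp add: algebra_simps)
      finally show ?thesis by (simp add: algebra_simps power2_eq_square)
    qed
    finally show "V * d * q * L2 * p * k1 * k2 * (V * L2 * q * k1) - V * p * (1 + d * q * L2 * k1) * (V * q * (L2 * k1 * k2 - l * p * k\<^sup>2))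
       = V\<^sup>2 * q * p\<^sup>2 * (- L1 * L2 * k1 * k2 + l * k\<^sup>2 + d * L2 * k1 * k\<^sup>2)" .
  qed
qed


lemma case1:
  fixes l d t S L1 L2 k1 k2 k :: real
  assumes l: "l > 0" and d: "d > 0" and t: "t > 0" and S: "S > 0" and L1pos: "L1 > 0" and L2pos: "L2 > 0"
    and L1low: "l / S \<le> L1" and kk: "k^2 * S^2 \<le> t^2"
    and k1: "k1 < 0" and k2: "k2 > d * t^2 / (l * S)"
  shows "k1 * (d * k2 / L1 + 1) < 0 \<and> - L1 * L2 * k1 * k2 + l * k^2 + d * L2 * k1 * k^2 > 0"
proof -
    have "d * t^2 / (l * S) > 0" using d t l S by simp
    then have k2p: "k2 > 0" using k2 by linarith
    have "d * k2 / L1 > 0" using k2p d L1pos by simp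
    then have "d * k2 / L1 + 1 > 0" by linarith
    then have A: "k1 * (d * k2 / L1 + 1) < 0" using k1 by (simp add: mult_neg_pos)
    have "l / S * k2 \<le> L1 * k2" using k2p by (intro mult_right_mono[OF L1low]) simp
    moreover have "l / S * k2 > l / S * (d * t^2 / (l * S))" using k2 l S by (intro mult_strict_left_mono) auto
    moreover have "l / S * (d * t^2 / (l * S)) = d * t^2 / S^2" using l S by (simp add: power2_eq_square)
    moreover have "d * t^2 / S^2 \<ge> d * k^2"
    proof -
      have "k^2 \<le> t^2 / S^2" using kk S by (simp add: pos_le_divide_eq)
      then have "d * k^2 \<le> d * (t^2 / S^2)" using d by (intro mult_left_mono) auto
      then show ?thesis by simp
    qed
    ultimately have pos: "L1 * k2 - d * k^2 > 0" by linarith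
    have "(-k1) * L2 > 0" using k1 L2pos by (intro mult_pos_pos) auto
    then have P: "(-k1) * L2 * (L1 * k2 - d * k^2) > 0" using pos by (rule mult_pos_pos)
    have "l * k^2 \<ge> 0" using l by simp
    moreover have "- L1 * L2 * k1 * k2 + l * k^2 + d * L2 * k1 * k^2 = (-k1) * L2 * (L1 * k2 - d * k^2) + l * k^2"
      by (simp add: algebra_simps)
    ultimately have B: "- L1 * L2 * k1 * k2 + l * k^2 + d * L2 * k1 * k^2 > 0" using P by linarith
    show ?thesis using A B by simp
qed

lemma case2:
  fixes l d L1 L2 k1 k2 k :: real
  assumes l: "l > 0" and d: "d > 0" and L1pos: "L1 > 0" and L1le: "L1 \<le> 1" and L2pos: "L2 > 0"
    and h: "k1 > 0 \<and> k2 < - 1 / d"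
  shows "k1 * (d * k2 / L1 + 1) < 0 \<and> - L1 * L2 * k1 * k2 + l * k^2 + d * L2 * k1 * k^2 > 0"
proof -
    have "d * k2 < -1" using h d by (simp add: field_simps)
    then have "d * k2 / L1 < -1 / L1" using L1pos by (rule divide_strict_right_mono)
    moreover have "-1 / L1 \<le> -1" using L1pos L1le by (simp add: field_simps)
    ultimately have "d * k2 / L1 + 1 < 0" by linarith
    then have A: "k1 * (d * k2 / L1 + 1) < 0" using h by (simp add: mult_pos_neg)
    have k2n: "k2 < 0"
    proof (rule ccontr)
      assume "\<not> k2 < 0" then have "d * k2 \<ge> 0" using d by simp
      then show False using \<open>d * k2 < -1\<close> by linarith
    qed
    have "L1 * L2 * k1 > 0" using L1pos L2pos h by simp
    then have "L1 * L2 * k1 * k2 < 0" using k2n by (simp add: mult_pos_neg)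
    moreover have "l * k^2 \<ge> 0" using l by simp
    moreover have "d * L2 * k1 * k^2 \<ge> 0" using d L2pos h by simp
    ultimately have B: "- L1 * L2 * k1 * k2 + l * k^2 + d * L2 * k1 * k^2 > 0" by linarith
    show ?thesis using A B by simp
qed

theorem proposition1:
  fixes l d V gmax k1 k2 :: real
  assumes "l > 0" and "d > 0" and "V > 0"
    and "0 < gmax" and "gmax < pi / 2"
    and "(k1 < 0 \<and> k2 > d / l * (tan gmax)^2 / sqrt (l^2 + d^2 * (tan gmax)^2))
         \<or> (k1 > 0 \<and> k2 < - 1 / d)"
  shows "\<forall>kappa0 :: real. \<bar>kappa0\<bar> \<le> kappa_bar l d gmax \<longrightarrow>
           (\<forall>ev :: complex. eigenvalue (map_mat complex_of_real (lin_matrix l d V k1 k2 kappa0)) ev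
              \<longrightarrow> Re ev < 0)"
proof (intro allI impI)
  fix k :: real and z :: complex
  assume kb: "\<bar>k\<bar> \<le> kappa_bar l d gmax"
    and ev: "eigenvalue (map_mat complex_of_real (lin_matrix l d V k1 k2 k)) z"
  define t where "t = tan gmax"
  have t: "t > 0" unfolding t_def using assms(4,5) by (simp add: tan_gt_zero)
  define S where "S = sqrt (l^2 + d^2 * t^2)"
  have S2: "S^2 = l^2 + d^2 * t^2" unfolding S_def by simp
  have S: "S > 0" unfolding S_def using assms(1) by (simp add: add_pos_nonneg)
  have kb': "\<bar>k\<bar> \<le> t / S" using kb unfolding kappa_bar_def t_def S_def .
  have "k^2 \<le> (t/S)^2" using kb' by (metis abs_ge_zero power2_abs power_mono)
  then have kk: "k^2 * S^2 \<le> t^2" using S by (simp add: power_divide pos_le_divide_eq)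
  define L1 where "L1 = sqrt (1 - d^2 * k^2)"
  define L2 where "L2 = 1 + (l^2 - d^2) * k^2"
  have dk: "d^2 * k^2 * S^2 \<le> d^2 * t^2" using kk by (simp add: mult_left_mono mult.assoc)
  have lowb: "l^2 \<le> (1 - d^2 * k^2) * S^2" using dk S2 by (simp add: algebra_simps)
  have pos1: "1 - d^2 * k^2 > 0"
  proof -
    have "(1 - d^2 * k^2) * S^2 > 0" using lowb assms(1) by (smt (verit) zero_less_power)
    then show ?thesis using S by (simp add: zero_less_mult_iff)
  qed
  have L1pos: "L1 > 0" unfolding L1_def using pos1 by simp
  have L1le: "L1 \<le> 1" unfolding L1_def using pos1 by simp
  have L1low: "l / S \<le> L1"
  proof -
    have "(l/S)^2 \<le> L1^2" unfolding L1_def using pos1 lowb S by (simp add: power_divide divide_le_eq)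
    then show ?thesis using L1pos by (meson less_le power2_le_imp_le)
  qed
  have L2pos: "L2 > 0" unfolding L2_def using pos1 by (smt (verit) mult_nonneg_nonneg zero_le_power2 left_diff_distrib)
  define a where "a = V * d / l * L2 / L1 * k1 * k2"
  define b where "b = V / L1 * (1 + d / l * L2 * k1)"
  define c where "c = V / l * (L2 * k1 * k2 - l / L1 * k^2)"
  define e where "e = V * L2 / l * k1"
  have eq: "lin_matrix l d V k1 k2 k = mat_of_rows_list 2 [[a, b], [c, e]]"
    unfolding lin_matrix_def a_def b_def c_def e_def L1_def L2_def Let_def by simp
  have tr: "a + e = V * L2 / l * k1 * (d * k2 / L1 + 1)"
    unfolding a_def e_def using L1pos assms(1) by (simp add: field_simps)
  have dt: "a * e - b * c = V^2 / (l * L1^2) * (- L1 * L2 * k1 * k2 + l * k^2 + d * L2 * k1 * k^2)"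
    unfolding a_def b_def c_def e_def by (rule dtl[OF L1pos assms(1)])
  have fac: "V * L2 / l > 0" using assms(1,3) L2pos by simp
  have fac2: "V^2 / (l * L1^2) > 0" using assms(1,3) L1pos by simp
  have "k1 * (d * k2 / L1 + 1) < 0 \<and> - L1 * L2 * k1 * k2 + l * k^2 + d * L2 * k1 * k^2 > 0"
    using assms(6)
  proof
    assume h: "k1 < 0 \<and> k2 > d / l * (tan gmax)^2 / sqrt (l^2 + d^2 * (tan gmax)^2)"
    then have k2: "k2 > d * t^2 / (l * S)" unfolding t_def S_def by simp
    show ?thesis using case1[OF assms(1,2) t S L1pos L2pos L1low kk] h k2 by blast
  next
    assume h: "k1 > 0 \<and> k2 < - 1 / d"
    show ?thesis using case2[OF assms(1,2) L1pos L1le L2pos h] .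
  qed
  then have C1: "k1 * (d * k2 / L1 + 1) < 0" and C2: "- L1 * L2 * k1 * k2 + l * k^2 + d * L2 * k1 * k^2 > 0" by auto
  have "a + e = (V * L2 / l) * (k1 * (d * k2 / L1 + 1))" unfolding tr by (simp only: mult.assoc)
  then have T: "a + e < 0" using mult_pos_neg[OF fac C1] by simp
  have D: "a * e - b * c > 0" unfolding dt using mult_pos_pos[OF fac2 C2] .
  have ev2: "eigenvalue (map_mat complex_of_real (mat_of_rows_list 2 [[a, b], [c, e]])) z"
    using ev unfolding eq .
  show "Re z < 0" by (rule eig_2x2[OF ev2 T D])
qed

end
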